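(* Let $\mathcal{X}$ be a measurable space, $K\ge1$, and let classifiers be measurable maps $\mathcal{X}\to[K]$. Let $\mathcal{B}$ assign to each $x$ a set $\mathcal{B}(x)\subseteq\mathcal{X}$ and let $\mathcal{N}(V)=\{x:\exists x'\in V,\ \mathcal{B}(x)\cap\mathcal{B}(x')\neq\emptyset\}$. Let $Q$ be a probability measure on $\mathcal{X}$ satisfying the $c$-expansion property for a non-increasing $c:[0,1]\to(0,\infty)$, i.e. $Q(\mathcal{N}(S))\ge c(Q(S))Q(S)$ for every measurable $S$. Let $F,H,G_{pl}$ be classifiers, $\gamma_H=c(Q(\{x:G_{pl}(x)\neq H(x)\}))$, and assume $\gamma_H>1$. Let $\mathcal{S}_{\mathcal{B}}(F)=\{x:F(x)=F(x')\ \forall x'\in\mathcal{B}(x)\}$ (similarly for $H$), with complements $\mathcal{S}_{\mathcal{B}}^c(\cdot)$; let $\mathcal{M}(G_{pl})=\{x:G_{pl}(x)\neq H(x)\}$ and $\mathcal{M}_{pl}(F)=\{x:F(x)\neq G_{pl}(x)\}$. Let $q=Q(\mathcal{M}_{pl}(F)\cup\mathcal{S}_{\mathcal{B}}^c(F)\cup\mathcal{S}_{\mathcal{B}}^c(H))/(\gamma_H-1)$ and $\mathcal{N}_3=\{x\in\mathcal{S}_{\mathcal{B}}(F)\cap\mathcal{S}_{\mathcal{B}}(H):F(x)\neq G_{pl}(x),\ G_{pl}(x)=H(x)\}$. Then $$Q(\mathcal{N}_3)\le q+Q\big(\mathcal{S}_{\mathcal{B}}^c(F)\cup\mathcal{S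}_{\mathcal{B}}^c(H)\big)+Q(\mathcal{M}_{pl}(F))-Q(\mathcal{M}(G_{pl})).$$
   Context: All sets are assumed measurable. *)

theory Defs
  imports "HOL-Probability.Probability"
begin

definition nbhd :: "'a set \<Rightarrow> ('a \<Rightarrow> 'a set) \<Rightarrow> 'a set \<Rightarrow> 'a set" where
  "nbhd X B V = {x \<in> X. \<exists>x'\<in>V. B x \<inter> B x' \<noteq> {}}"

definition robust_set :: "'a set \<Rightarrow> ('a \<Rightarrow> 'a set) \<Rightarrow> ('a \<Rightarrow> nat) \<Rightarrow> 'a set" where
  "robust_set X B F = {x \<in> X. \<forall>x'\<in>B x. F x = F x'}"

definition expansion :: "'a measure \<Rightarrow> ('a \<Rightarrow> 'a set) \<Rightarrow> (real \<Rightarrow> real) \<Rightarrow> bool" where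
  "expansion Q B c \<longleftrightarrow>
     (\<forall>S \<in> sets Q. measure Q (nbhd (space Q) B S) \<ge> c (measure Q S) * measure Q S)"

end

theory Submission imports Defs begin
lemma pred_sets2:
  fixes F G :: "'a \<Rightarrow> nat"
  assumes F: "F \<in> Q \<rightarrow>\<^sub>M count_space {1..K}" and G: "G \<in> Q \<rightarrow>\<^sub>M count_space {1..K}"
  shows "{x \<in> space Q. P (F x) (G x)} \<in> sets Q"
proof -
  have sF: "F x \<in> {1..K}" if "x \<in> space Q" for x
  proof -
    have "F x \<in> space (count_space {1..K})" by (rule measurable_space[OF F that])
    then show ?thesis by simp
  qed
  have sG: "G x \<in> {1..K}" if "x \<in> space Q" for x
  proof -
    have "G x \<in> space (count_space {1..K})" by (rule measurable_space[OF G that])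
    then show ?thesis by simp
  qed
  let ?I = "{p \<in> {1..K}\<times>{1..K}. P (fst p) (snd p)}"
  have eq: "{x \<in> space Q. P (F x) (G x)} =
     (\<Union>p\<in>?I. (F -` {fst p} \<inter> space Q) \<inter> (G -` {snd p} \<inter> space Q))"
  proof (intro equalityI subsetI)
    fix x assume "x \<in> {x \<in> space Q. P (F x) (G x)}"
    then show "x \<in> (\<Union>p\<in>?I. (F -` {fst p} \<inter> space Q) \<inter> (G -` {snd p} \<inter> space Q))"
      using sF sG by (intro UN_I[of "(F x, G x)"]) auto
  qed auto
  have "\<And>i. i \<in> {1..K} \<Longrightarrow> F -` {i} \<inter> space Q \<in> sets Q" using F by (intro measurable_sets) auto
  moreover have "\<And>i. i \<in> {1..K} \<Longrightarrow> G -` {i} \<inter> space Q \<in> sets Q" using G by (intro measurable_sets) auto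
  moreover have "finite ?I" by simp
  ultimately show ?thesis unfolding eq by (intro sets.finite_UN) auto
qed

theorem mainTheorem4:
  fixes Q :: "'a measure" and B :: "'a \<Rightarrow> 'a set" and c :: "real \<Rightarrow> real"
    and K :: nat and F H Gpl :: "'a \<Rightarrow> nat"
  assumes K: "K \<ge> 1"
    and prob: "prob_space Q"
    and F_meas: "F \<in> Q \<rightarrow>\<^sub>M count_space {1..K}"
    and H_meas: "H \<in> Q \<rightarrow>\<^sub>M count_space {1..K}"
    and G_meas: "Gpl \<in> Q \<rightarrow>\<^sub>M count_space {1..K}"
    and B_sub: "\<And>x. x \<in> space Q \<Longrightarrow> B x \<subseteq> space Q"
    and nbhd_meas: "\<And>S. S \<in> sets Q \<Longrightarrow> nbhd (space Q) B S \<in> sets Q"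
    and robF_meas: "robust_set (space Q) B F \<in> sets Q"
    and robH_meas: "robust_set (space Q) B H \<in> sets Q"
    and c_pos: "\<And>t. 0 \<le> t \<Longrightarrow> t \<le> 1 \<Longrightarrow> c t > 0"
    and c_noninc: "\<And>s t. 0 \<le> s \<Longrightarrow> s \<le> t \<Longrightarrow> t \<le> 1 \<Longrightarrow> c t \<le> c s"
    and exp: "expansion Q B c"
    and gamma_gt: "c (measure Q {x \<in> space Q. Gpl x \<noteq> H x}) > 1"
  shows
    "let \<gamma>H = c (measure Q {x \<in> space Q. Gpl x \<noteq> H x});
         SF = robust_set (space Q) B F;
         SH = robust_set (space Q) B H;
         SFc = space Q - SF;
         SHc = space Q - SH;
         MG = {x \<in> space Q. Gpl x \<noteq> H x};
         MplF = {x \<in> space Q. F x \<noteq> Gpl x};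
         q = measure Q (MplF \<union> SFc \<union> SHc) / (\<gamma>H - 1);
         N3 = {x \<in> SF \<inter> SH. F x \<noteq> Gpl x \<and> Gpl x = H x}
     in measure Q N3 \<le> q + measure Q (SFc \<union> SHc) + measure Q MplF - measure Q MG"
proof -
  interpret prob_space Q by (rule prob)
  define \<gamma> where "\<gamma> = c (measure Q {x \<in> space Q. Gpl x \<noteq> H x})"
  define SF where "SF = robust_set (space Q) B F"
  define SH where "SH = robust_set (space Q) B H"
  define MG where "MG = {x \<in> space Q. Gpl x \<noteq> H x}"
  define MplF where "MplF = {x \<in> space Q. F x \<noteq> Gpl x}"
  define Bd where "Bd = (space Q - SF) \<union> (space Q - SH)"
  define U where "U = MplF \<union> Bd"
  define S where "S = MG - U"
  define N3 where "N3 = {x \<in> SF \<inter> SH. F x \<noteq> Gpl x \<and> Gpl x = H x}"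
  have SF_sub: "SF \<subseteq> space Q" and SH_sub: "SH \<subseteq> space Q"
    unfolding SF_def SH_def robust_set_def by auto
  have mSF: "SF \<in> sets Q" and mSH: "SH \<in> sets Q" using robF_meas robH_meas SF_def SH_def by auto
  have mMG: "MG \<in> sets Q" unfolding MG_def by (rule pred_sets2[OF G_meas H_meas])
  have mMplF: "MplF \<in> sets Q" unfolding MplF_def by (rule pred_sets2[OF F_meas G_meas])
  have mBd: "Bd \<in> sets Q" unfolding Bd_def using mSF mSH by auto
  have mU: "U \<in> sets Q" unfolding U_def using mMplF mBd by auto
  have mS: "S \<in> sets Q" unfolding S_def using mMG mU by auto
  have mE: "{x \<in> space Q. Gpl x = H x} \<in> sets Q" by (rule pred_sets2[OF G_meas H_meas])
  have N3eq: "N3 = SF \<inter> SH \<inter> MplF \<inter> {x \<in> space Q. Gpl x = H x}"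
    unfolding N3_def MplF_def using SF_sub by auto
  have mN3: "N3 \<in> sets Q" unfolding N3eq using mSF mSH mMplF mE by auto
  have nb: "nbhd (space Q) B S \<subseteq> S \<union> U"
  proof
    fix x assume x: "x \<in> nbhd (space Q) B S"
    then obtain x' z where xs: "x \<in> space Q" and x'S: "x' \<in> S" and zx: "z \<in> B x" and zx': "z \<in> B x'"
      unfolding nbhd_def by auto
    show "x \<in> S \<union> U"
    proof (cases "x \<in> U")
      case False
      then have xSF: "x \<in> SF" and xSH: "x \<in> SH" and FG: "F x = Gpl x"
        unfolding U_def Bd_def MplF_def using xs by auto
      from x'S have x'SF: "x' \<in> SF" and x'SH: "x' \<in> SH" and FG': "F x' = Gpl x'" and GH': "Gpl x' \<noteq> H x'"
        unfolding S_def U_def Bd_def MplF_def MG_def by auto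
      have "F x = F z" using xSF zx unfolding SF_def robust_set_def by auto
      moreover have "F x' = F z" using x'SF zx' unfolding SF_def robust_set_def by auto
      moreover have "H x = H z" using xSH zx unfolding SH_def robust_set_def by auto
      moreover have "H x' = H z" using x'SH zx' unfolding SH_def robust_set_def by auto
      ultimately have "Gpl x \<noteq> H x" using FG FG' GH' by auto
      then have "x \<in> MG" unfolding MG_def using xs by auto
      then show ?thesis using False unfolding S_def by auto
    qed auto
  qed
  have p1: "prob (nbhd (space Q) B S) \<le> prob S + prob U"
  proof -
    have "prob (nbhd (space Q) B S) \<le> prob (S \<union> U)"
      using nb mS mU by (intro finite_measure_mono) auto
    also have "\<dots> \<le> prob S + prob U" using mS mU by (intro measure_subadditive) auto
    finally show ?thesis .
  qed
  have SleMG: "prob S \<le> prob MG" using mMG unfolding S_def by (intro finite_measure_mono) auto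
  have cS: "\<gamma> \<le> c (prob S)"
    unfolding \<gamma>_def using SleMG unfolding MG_def by (intro c_noninc) auto
  have p2: "c (prob S) * prob S \<le> prob (nbhd (space Q) B S)"
    using exp mS unfolding expansion_def by auto
  have "\<gamma> * prob S \<le> c (prob S) * prob S" using cS by (intro mult_right_mono) auto
  with p1 p2 have "(\<gamma> - 1) * prob S \<le> prob U" by (simp add: algebra_simps)
  moreover have g1: "\<gamma> > 1" using gamma_gt \<gamma>_def by simp
  ultimately have Sq: "prob S \<le> prob U / (\<gamma> - 1)" by (simp add: field_simps)
  have "MG - MplF \<subseteq> S \<union> Bd" unfolding S_def U_def by auto
  then have "prob (MG - MplF) \<le> prob (S \<union> Bd)" using mS mBd by (intro finite_measure_mono) auto
  also have "\<dots> \<le> prob S + prob Bd" using mS mBd by (intro measure_subadditive) auto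
  finally have A: "prob (MG - MplF) \<le> prob U / (\<gamma> - 1) + prob Bd" using Sq by simp
  have "prob N3 + prob (MG \<inter> MplF) = prob (N3 \<union> (MG \<inter> MplF))"
    using mN3 mMG mMplF unfolding N3_def MG_def by (intro finite_measure_Union[symmetric]) auto
  also have "\<dots> \<le> prob MplF" using mMplF unfolding N3eq by (intro finite_measure_mono) auto
  finally have Bq: "prob N3 + prob (MG \<inter> MplF) \<le> prob MplF" .
  have "prob MG = prob ((MG \<inter> MplF) \<union> (MG - MplF))" by (metis Int_Diff_Un)
  also have "\<dots> = prob (MG \<inter> MplF) + prob (MG - MplF)"
    using mMG mMplF by (intro finite_measure_Union) auto
  finally have C: "prob MG = prob (MG \<inter> MplF) + prob (MG - MplF)" .
  have "prob N3 \<le> prob U / (\<gamma> - 1) + prob Bd + prob MplF - prob MG"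
    using A Bq C by linarith
  then show ?thesis
    unfolding Let_def \<gamma>_def[symmetric] SF_def[symmetric] SH_def[symmetric] MG_def[symmetric]
      MplF_def[symmetric] N3_def[symmetric]
    by (simp add: U_def Bd_def Un_assoc \<gamma>_def MG_def)
qed

end
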